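(* Let $\Gamma$ be an elliptic graph with NN-elliptic sequence $\{B_j\}$ and cycles $C_j$. For any $-1\le j\le m-1$ and any $\ell\in Supp_j(P_0)$ one has $\ell_v\ge0$ for all $v\in\mathcal V(B_{j+1})$ and $\ell_v<0$ for all $v\in\mathcal V(\Gamma)\setminus\mathcal V(B_{j+1})$.
   Context: Let $\Gamma$ be a finite connected tree with vertex set $\mathcal V$, each vertex $v$ decorated by an integer $e_v$ (genera zero). $L=\mathbb Z\langle E_v\rangle$ with form $(E_v,E_v)=e_v$, $(E_v,E_w)=1$ for adjacent $v\ne w$, $0$ otherwise, assumed negative definite; $L'$ the dual lattice, $[l']$ the class in $L'/L$; $E_v^*$ with $(E_v^*,E_w)=-\delta_{vw}$; $\delta_v$ valency; $E=\sum E_v$; $\ge$ coordinatewise, $\prec$ strict in all coordinates, $l>0$ if $l\ge0,l\ne0$; $|l'|$ the support. $Z_K$ with $(Z_K,E_v)=e_v+2$; $\chi(l')=-(l',l'-Z_K)/2$. $\mathcal S'=\{l':(l',E_v)\le0\ \forall v\}$, $s_h=\min\{l'\in\mathcal S':[l']=h\}$; $Z_{min}(B)$ the minimal nonzero element of $\mathcal S'(B)\cap L(B)$. $Z(\mathbf t)=\sum z(l')\mathbf t^{l'}$ the Taylor expansion at $0$ of $\prod_v(1-\mathbf t^{E_v^*})^{\delta_v-2}$; $P_0(\mathbf t)=\sum_{\ell\in L,\ell\not\prec0}w(\ell)\mathbf t^\ell$, $w(\ell)=z(Z_K-E-\ell)$, $Supp(P_0)=\{\ell\not\prec0:w(\ell)\ne0\}$.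 Elliptic graph: $e_v\le-2$ for all $v$, $\min_{l\in L,l>0}\chi(l)=0$. NN-elliptic sequence: $B_{-1}=\Gamma$, $Z_{B_{-1}}=s_{[Z_K]}$, $B_0=|Z_K-s_{[Z_K]}|$; for $j\ge0$, $Z_{B_j}=Z_{min}(B_j)$, and if $Z_K-\sum_{i=-1}^jZ_{B_i}\ne0$ then $B_{j+1}=|Z_K-\sum_{i=-1}^jZ_{B_i}|$; $m$ is the index with $Z_K=\sum_{i=-1}^mZ_{B_i}$; $C_j=\sum_{i=-1}^jZ_{B_i}$. For $\ell\in Supp(P_0)$ with $\mathcal V^{<0}(\ell)=\{v:\ell_v<0\}$, the associated cycle is the unique $l'$ with $\ell=Z_K-E-l'-\sum_{v\in\mathcal V^{<0}(\ell)}m_vE_v$, $l'\le Z_K$, $l'_v=(Z_K)_v$ on $\mathcal V^{<0}(\ell)$, $m_v\in\mathbb Z_{\ge0}$; $Supp_j(P_0)$ is the set of $\ell$ with associated cycle $C_j$. *)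

theory Defs
  imports Complex_Main "HOL-Library.Function_Algebras"
begin

text \<open>Plumbing graphs: a finite vertex set V, an adjacency relation adj, decorations e.
  Cycles (elements of L, L' and L tensor Q) are represented by their coefficient
  functions 'a => rat with respect to the basis E_v, vanishing outside V.\<close>

definition is_tree :: "'a set \<Rightarrow> ('a \<Rightarrow> 'a \<Rightarrow> bool) \<Rightarrow> bool" where
  "is_tree V adj \<longleftrightarrow> finite V \<and> V \<noteq> {} \<and>
     (\<forall>v w. adj v w \<longrightarrow> v \<in> V \<and> w \<in> V \<and> v \<noteq> w \<and> adj w v) \<and>
     (\<forall>v\<in>V. \<forall>w\<in>V. adj\<^sup>*\<^sup>* v w) \<and>
     card {(v, w). adj v w} = 2 * (card V - 1)"

definition form :: "('a \<Rightarrow> 'a \<Rightarrow> bool) \<Rightarrow> ('a \<Rightarrow> int) \<Rightarrow> 'a \<Rightarrow> 'a \<Rightarrow> int" where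
  "form adj e v w = (if v = w then e v else if adj v w then 1 else 0)"

definition pair :: "'a set \<Rightarrow> ('a \<Rightarrow> 'a \<Rightarrow> bool) \<Rightarrow> ('a \<Rightarrow> int) \<Rightarrow> ('a \<Rightarrow> rat) \<Rightarrow> ('a \<Rightarrow> rat) \<Rightarrow> rat" where
  "pair V adj e x y = (\<Sum>v\<in>V. \<Sum>w\<in>V. x v * y w * of_int (form adj e v w))"

definition Ev :: "'a \<Rightarrow> 'a \<Rightarrow> rat" where
  "Ev v = (\<lambda>w. if w = v then 1 else 0)"

definition Etot :: "'a set \<Rightarrow> 'a \<Rightarrow> rat" where
  "Etot V = (\<lambda>w. if w \<in> V then 1 else 0)"

definition cyc :: "'a set \<Rightarrow> ('a \<Rightarrow> rat) \<Rightarrow> bool" where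
  "cyc V x \<longleftrightarrow> (\<forall>v. v \<notin> V \<longrightarrow> x v = 0)"

definition integral :: "('a \<Rightarrow> rat) \<Rightarrow> bool" where
  "integral x \<longleftrightarrow> (\<forall>v. x v \<in> \<int>)"

definition Lat :: "'a set \<Rightarrow> ('a \<Rightarrow> rat) set" where
  "Lat V = {x. cyc V x \<and> integral x}"

definition Ldual :: "'a set \<Rightarrow> ('a \<Rightarrow> 'a \<Rightarrow> bool) \<Rightarrow> ('a \<Rightarrow> int) \<Rightarrow> ('a \<Rightarrow> rat) set" where
  "Ldual V adj e = {x. cyc V x \<and> (\<forall>w\<in>V. pair V adj e x (Ev w) \<in> \<int>)}"

definition neg_definite :: "'a set \<Rightarrow> ('a \<Rightarrow> 'a \<Rightarrow> bool) \<Rightarrow> ('a \<Rightarrow> int) \<Rightarrow> bool" where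
  "neg_definite V adj e \<longleftrightarrow> (\<forall>l\<in>Lat V. l \<noteq> 0 \<longrightarrow> pair V adj e l l < 0)"

definition Estar :: "'a set \<Rightarrow> ('a \<Rightarrow> 'a \<Rightarrow> bool) \<Rightarrow> ('a \<Rightarrow> int) \<Rightarrow> 'a \<Rightarrow> 'a \<Rightarrow> rat" where
  "Estar V adj e v = (THE x. cyc V x \<and>
      (\<forall>w\<in>V. pair V adj e x (Ev w) = (if v = w then -1 else 0)))"

definition ZK :: "'a set \<Rightarrow> ('a \<Rightarrow> 'a \<Rightarrow> bool) \<Rightarrow> ('a \<Rightarrow> int) \<Rightarrow> 'a \<Rightarrow> rat" where
  "ZK V adj e = (THE x. cyc V x \<and> (\<forall>v\<in>V. pair V adj e x (Ev v) = of_int (e v + 2)))"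

definition chi :: "'a set \<Rightarrow> ('a \<Rightarrow> 'a \<Rightarrow> bool) \<Rightarrow> ('a \<Rightarrow> int) \<Rightarrow> ('a \<Rightarrow> rat) \<Rightarrow> rat" where
  "chi V adj e l = - pair V adj e l (l - ZK V adj e) / 2"

definition elliptic :: "'a set \<Rightarrow> ('a \<Rightarrow> 'a \<Rightarrow> bool) \<Rightarrow> ('a \<Rightarrow> int) \<Rightarrow> bool" where
  "elliptic V adj e \<longleftrightarrow> (\<forall>v\<in>V. e v \<le> -2) \<and>
     (\<forall>l\<in>Lat V. 0 \<le> l \<and> l \<noteq> 0 \<longrightarrow> 0 \<le> chi V adj e l) \<and>
     (\<exists>l\<in>Lat V. 0 \<le> l \<and> l \<noteq> 0 \<and> chi V adj e l = 0)"

definition minimum_of :: "('a \<Rightarrow> rat) set \<Rightarrow> 'a \<Rightarrow> rat" where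
  "minimum_of A = (THE x. x \<in> A \<and> (\<forall>y\<in>A. x \<le> y))"

definition Sprime :: "'a set \<Rightarrow> ('a \<Rightarrow> 'a \<Rightarrow> bool) \<Rightarrow> ('a \<Rightarrow> int) \<Rightarrow> ('a \<Rightarrow> rat) set" where
  "Sprime V adj e = {x \<in> Ldual V adj e. \<forall>v\<in>V. pair V adj e x (Ev v) \<le> 0}"

definition s_class :: "'a set \<Rightarrow> ('a \<Rightarrow> 'a \<Rightarrow> bool) \<Rightarrow> ('a \<Rightarrow> int) \<Rightarrow> ('a \<Rightarrow> rat) \<Rightarrow> 'a \<Rightarrow> rat" where
  "s_class V adj e l' = minimum_of {x \<in> Sprime V adj e. x - l' \<in> Lat V}"

text \<open>Z_min(B) for a (full) subgraph with vertex set B: minimal nonzero element of S'(B) \<inter> L(B).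
  For l supported on B the pairing with E_v (v in B) in B agrees with that in Gamma.\<close>
definition Zmin :: "'a set \<Rightarrow> ('a \<Rightarrow> 'a \<Rightarrow> bool) \<Rightarrow> ('a \<Rightarrow> int) \<Rightarrow> 'a set \<Rightarrow> 'a \<Rightarrow> rat" where
  "Zmin V adj e B = minimum_of
     {l \<in> Lat B. l \<noteq> 0 \<and> (\<forall>v\<in>B. pair V adj e l (Ev v) \<le> 0)}"

definition supp :: "'a set \<Rightarrow> ('a \<Rightarrow> rat) \<Rightarrow> 'a set" where
  "supp V x = {v \<in> V. x v \<noteq> 0}"

text \<open>Cseq n = C_(n-1) of the NN-elliptic sequence, so Cseq 0 = C_(-1) = s_[Z_K],
  and B_(n) = supp (Z_K - Cseq n), Cseq (Suc n) = Cseq n + Z_min(B_n).\<close>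
fun Cseq :: "'a set \<Rightarrow> ('a \<Rightarrow> 'a \<Rightarrow> bool) \<Rightarrow> ('a \<Rightarrow> int) \<Rightarrow> nat \<Rightarrow> 'a \<Rightarrow> rat" where
  "Cseq V adj e 0 = s_class V adj e (ZK V adj e)"
| "Cseq V adj e (Suc n) = Cseq V adj e n
     + Zmin V adj e (supp V (ZK V adj e - Cseq V adj e n))"

definition valency :: "'a set \<Rightarrow> ('a \<Rightarrow> 'a \<Rightarrow> bool) \<Rightarrow> 'a \<Rightarrow> nat" where
  "valency V adj v = card {w\<in>V. adj v w}"

text \<open>Coefficient of x^k in (1 - x)^n, n an integer.\<close>
definition bincoef :: "int \<Rightarrow> nat \<Rightarrow> rat" where
  "bincoef n k = (-1) ^ k * (of_int n gchoose k)"

text \<open>Taylor coefficient z(l') of prod_v (1 - t^(E_v^* ))^(delta_v - 2): the sum over all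
  exponent tuples (k_v) with sum_v k_v E_v^* = l' of the product of the coefficients.\<close>
definition zcoef :: "'a set \<Rightarrow> ('a \<Rightarrow> 'a \<Rightarrow> bool) \<Rightarrow> ('a \<Rightarrow> int) \<Rightarrow> ('a \<Rightarrow> rat) \<Rightarrow> rat" where
  "zcoef V adj e l' =
     (\<Sum>k\<in>{k :: 'a \<Rightarrow> nat. (\<forall>v. v \<notin> V \<longrightarrow> k v = 0) \<and>
            (\<lambda>w. \<Sum>v\<in>V. of_nat (k v) * Estar V adj e v w) = l'}.
        \<Prod>v\<in>V. bincoef (int (valency V adj v) - 2) (k v))"

definition wP0 :: "'a set \<Rightarrow> ('a \<Rightarrow> 'a \<Rightarrow> bool) \<Rightarrow> ('a \<Rightarrow> int) \<Rightarrow> ('a \<Rightarrow> rat) \<Rightarrow> rat" where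
  "wP0 V adj e l = zcoef V adj e (ZK V adj e - Etot V - l)"

definition SuppP0 :: "'a set \<Rightarrow> ('a \<Rightarrow> 'a \<Rightarrow> bool) \<Rightarrow> ('a \<Rightarrow> int) \<Rightarrow> ('a \<Rightarrow> rat) set" where
  "SuppP0 V adj e = {l \<in> Lat V. \<not> (\<forall>v\<in>V. l v < 0) \<and> wP0 V adj e l \<noteq> 0}"

definition Vneg :: "'a set \<Rightarrow> ('a \<Rightarrow> rat) \<Rightarrow> 'a set" where
  "Vneg V l = {v \<in> V. l v < 0}"

definition assoc_cycle :: "'a set \<Rightarrow> ('a \<Rightarrow> 'a \<Rightarrow> bool) \<Rightarrow> ('a \<Rightarrow> int) \<Rightarrow> ('a \<Rightarrow> rat) \<Rightarrow> 'a \<Rightarrow> rat" where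
  "assoc_cycle V adj e l = (THE l'. cyc V l' \<and> l' \<le> ZK V adj e \<and>
      (\<forall>v\<in>Vneg V l. l' v = ZK V adj e v) \<and>
      (\<exists>m :: 'a \<Rightarrow> nat. l = ZK V adj e - Etot V - l'
          - (\<lambda>w. if w \<in> Vneg V l then of_nat (m w) else 0)))"

end

theory Submission
  imports Defs "Jordan_Normal_Form.Determinant"
begin

lemma pair_Ev:
  assumes "finite V" "w \<in> V"
  shows "pair V adj e x (Ev w) = (\<Sum>v\<in>V. x v * of_int (form adj e v w))"
  unfolding pair_def
proof (rule sum.cong[OF refl])
  fix v assume "v \<in> V"
  have "(\<Sum>w'\<in>V. x v * Ev w w' * of_int (form adj e v w')) =
        (\<Sum>w'\<in>V. if w' = w then x v * of_int (form adj e v w') else 0)"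
    by (rule sum.cong) (auto simp: Ev_def)
  also have "\<dots> = x v * of_int (form adj e v w)" using assms by (simp add: sum.delta')
  finally show "(\<Sum>w'\<in>V. x v * Ev w w' * of_int (form adj e v w')) = x v * of_int (form adj e v w)" .
qed

lemma pair_self:
  assumes "finite V"
  shows "pair V adj e x x = (\<Sum>w\<in>V. x w * pair V adj e x (Ev w))"
proof -
  have "(\<Sum>w\<in>V. x w * pair V adj e x (Ev w)) = (\<Sum>w\<in>V. \<Sum>v\<in>V. x v * x w * of_int (form adj e v w))"
    using assms by (simp add: pair_Ev sum_distrib_left algebra_simps)
  also have "\<dots> = pair V adj e x x" unfolding pair_def by (rule sum.swap)
  finally show ?thesis by simp
qed

lemma pair_scale:
  "pair V adj e (\<lambda>w. c * x w) (\<lambda>w. c * x w) = c * c * pair V adj e x x"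
  unfolding pair_def by (simp add: sum_distrib_left algebra_simps)

lemma pair_diff:
  "pair V adj e (x - y) z = pair V adj e x z - pair V adj e y z"
  unfolding pair_def by (simp add: sum_subtractf algebra_simps)

lemma inj_lemma:
  assumes fin: "finite V" and nd: "neg_definite V adj e" and cx: "cyc V x"
    and z: "\<forall>w\<in>V. pair V adj e x (Ev w) = 0"
  shows "x = 0"
proof -
  have pxx: "pair V adj e x x = 0" using pair_self[OF fin] z by simp
  define Di where "Di = (\<Prod>v\<in>V. snd (quotient_of (x v)))"
  define D :: rat where "D = of_int Di"
  have Dipos: "Di > 0" unfolding Di_def by (rule prod_pos) (simp add: quotient_of_denom_pos')
  hence D0: "D \<noteq> 0" unfolding D_def by simp
  define l where "l = (\<lambda>w. D * x w)"
  have lint: "l w \<in> \<int>" for w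
  proof (cases "w \<in> V")
    case True
    obtain a b where q: "quotient_of (x w) = (a, b)" by (cases "quotient_of (x w)")
    have xw: "x w = of_int a / of_int b" using quotient_of_div[OF q] .
    have b0: "b > 0" using quotient_of_denom_pos[OF q] .
    have "Di = b * (\<Prod>v\<in>V - {w}. snd (quotient_of (x v)))"
      unfolding Di_def using prod.remove[OF fin True, of "\<lambda>v. snd (quotient_of (x v))"] q by simp
    hence "l w = of_int (a * (\<Prod>v\<in>V - {w}. snd (quotient_of (x v))))"
      unfolding l_def D_def xw using b0 by simp
    thus ?thesis by (metis Ints_of_int)
  next
    case False
    thus ?thesis using cx unfolding cyc_def l_def by simp
  qed
  have lL: "l \<in> Lat V" unfolding Lat_def cyc_def integral_def
    using lint cx unfolding cyc_def l_def by auto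
  have "pair V adj e l l = 0" unfolding l_def pair_scale pxx by simp
  hence "l = 0" using nd lL unfolding neg_definite_def by force
  hence "\<forall>w. D * x w = 0" unfolding l_def by (metis zero_fun_def)
  thus ?thesis using D0 by (auto simp: fun_eq_iff)
qed

lemma exists_solution:
  assumes fin: "finite V" and nd: "neg_definite V adj e"
  shows "\<exists>x. cyc V x \<and> (\<forall>w\<in>V. pair V adj e x (Ev w) = b w)"
proof -
  obtain xs where sx: "set xs = V" and dx: "distinct xs" using finite_distinct_list[OF fin] by blast
  define n where "n = length xs"
  define F where "F u = (\<lambda>w. \<Sum>i<n. if xs!i = w then u$i else (0::rat))" for u :: "rat vec"
  have F_nth: "F u (xs!j) = u$j" if "j < n" for u j
  proof -
    have "F u (xs!j) = (\<Sum>i<n. if i = j then u$i else 0)"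
      unfolding F_def using dx that n_def by (intro sum.cong) (auto simp: nth_eq_iff_index_eq)
    thus ?thesis using that by simp
  qed
  have F_cyc: "cyc V (F u)" for u
    unfolding cyc_def F_def using sx n_def by (auto intro!: sum.neutral)
  have Vimg: "V = nth xs ` {..<n}" using sx n_def by (auto simp: set_conv_nth)
  have inj: "inj_on (nth xs) {..<n}" using dx n_def by (intro inj_on_nth) auto
  have sumV: "(\<Sum>v\<in>V. g v) = (\<Sum>i<n. g (xs!i))" for g :: "'a \<Rightarrow> rat"
    unfolding Vimg using sum.reindex[OF inj] by simp
  define A :: "rat mat" where "A = mat n n (\<lambda>(j,i). of_int (form adj e (xs!i) (xs!j)))"
  have A: "A \<in> carrier_mat n n" unfolding A_def by simp
  have pairF: "pair V adj e (F u) (Ev (xs!j)) = (A *\<^sub>v u)$j"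
    if "j < n" "u \<in> carrier_vec n" for u j
  proof -
    have xj: "xs!j \<in> V" using sx that n_def by auto
    have "pair V adj e (F u) (Ev (xs!j)) = (\<Sum>i<n. F u (xs!i) * of_int (form adj e (xs!i) (xs!j)))"
      using pair_Ev[OF fin xj] sumV by simp
    also have "\<dots> = (\<Sum>i<n. u$i * of_int (form adj e (xs!i) (xs!j)))"
      by (intro sum.cong) (auto simp: F_nth)
    also have "\<dots> = (A *\<^sub>v u)$j"
      using that unfolding A_def
      by (auto simp: scalar_prod_def atLeast0LessThan intro!: sum.cong)
    finally show ?thesis .
  qed
  have Fz: "u = 0\<^sub>v n" if "u \<in> carrier_vec n" "A *\<^sub>v u = 0\<^sub>v n" for u
  proof -
    have "\<forall>w\<in>V. pair V adj e (F u) (Ev w) = 0"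
    proof
      fix w assume "w \<in> V"
      then obtain j where j: "j < n" "w = xs!j" using Vimg by auto
      show "pair V adj e (F u) (Ev w) = 0" using pairF[OF j(1) that(1)] that(2) j by simp
    qed
    hence "F u = 0" using inj_lemma[OF fin nd F_cyc] by blast
    hence "u$j = 0" if "j < n" for j using F_nth[OF that, of u] by simp
    thus ?thesis using that(1) by (intro eq_vecI) auto
  qed
  have dA: "det A \<noteq> 0"
  proof
    assume "det A = 0"
    then obtain v where "v \<in> carrier_vec n" "v \<noteq> 0\<^sub>v n" "A *\<^sub>v v = 0\<^sub>v n"
      using det_0_iff_vec_prod_zero_field[OF A] by blast
    thus False using Fz by blast
  qed
  define bv where "bv = vec n (\<lambda>j. b (xs!j))"
  define u where "u = inverse (det A) \<cdot>\<^sub>v (adj_mat A *\<^sub>v bv)"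
  have bvc: "bv \<in> carrier_vec n" unfolding bv_def by simp
  have adjc: "adj_mat A \<in> carrier_mat n n" using adj_mat(1)[OF A] .
  have uc: "u \<in> carrier_vec n" unfolding u_def using adjc bvc by simp
  have "A *\<^sub>v u = inverse (det A) \<cdot>\<^sub>v (A *\<^sub>v (adj_mat A *\<^sub>v bv))"
    unfolding u_def using mult_mat_vec[OF A] adjc bvc by simp
  also have "A *\<^sub>v (adj_mat A *\<^sub>v bv) = (A * adj_mat A) *\<^sub>v bv"
    using A adjc bvc by simp
  also have "\<dots> = (det A \<cdot>\<^sub>m 1\<^sub>m n) *\<^sub>v bv" using adj_mat(2)[OF A] by simp
  also have "\<dots> = det A \<cdot>\<^sub>v bv" using bvc
  proof (intro eq_vecI)
    fix i assume i: "i < dim_vec (det A \<cdot>\<^sub>v bv)"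
    hence i': "i < n" using bvc by simp
    have "(\<Sum>ia = 0..<n. det A * (if ia = i then 1 else 0) * bv $ ia) =
          (\<Sum>ia = 0..<n. if ia = i then det A * bv $ ia else 0)"
      by (intro sum.cong) auto
    also have "\<dots> = det A * bv $ i" using i' by simp
    finally show "((det A \<cdot>\<^sub>m 1\<^sub>m n) *\<^sub>v bv) $ i = (det A \<cdot>\<^sub>v bv) $ i"
      using i' bvc by (simp add: scalar_prod_def)
  qed (use bvc in simp)
  finally have Au: "A *\<^sub>v u = bv" using dA by (auto simp: smult_smult_assoc)
  show ?thesis
  proof (intro exI conjI ballI)
    show "cyc V (F u)" by (rule F_cyc)
    fix w assume "w \<in> V"
    then obtain j where j: "j < n" "w = xs!j" using Vimg by auto
    show "pair V adj e (F u) (Ev w) = b w" using pairF[OF j(1) uc] Au j unfolding bv_def by simp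
  qed
qed

lemma ZK_cyc:
  assumes fin: "finite V" and nd: "neg_definite V adj e"
  shows "cyc V (ZK V adj e)"
proof -
  let ?P = "\<lambda>x. cyc V x \<and> (\<forall>v\<in>V. pair V adj e x (Ev v) = of_int (e v + 2))"
  have ex: "\<exists>x. ?P x" using exists_solution[OF fin nd, of "\<lambda>v. of_int (e v + 2)"] by simp
  have un: "x = y" if "?P x" "?P y" for x y
  proof -
    have "cyc V (x - y)" using that unfolding cyc_def by simp
    moreover have "\<forall>w\<in>V. pair V adj e (x - y) (Ev w) = 0" using that by (simp add: pair_diff)
    ultimately have "x - y = 0" using inj_lemma[OF fin nd] by blast
    thus ?thesis by simp
  qed
  have "\<exists>!x. ?P x" using ex un by blast
  from theI'[OF this] show ?thesis unfolding ZK_def by blast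
qed

theorem mainTheorem15:
  fixes V :: "'a set" and adj :: "'a \<Rightarrow> 'a \<Rightarrow> bool" and e :: "'a \<Rightarrow> int"
    and mm n :: nat and l :: "'a \<Rightarrow> rat"
  assumes "is_tree V adj" and "neg_definite V adj e" and "elliptic V adj e"
    and "Cseq V adj e mm = ZK V adj e"
    and "\<forall>k<mm. Cseq V adj e k \<noteq> ZK V adj e"
    and "n < mm"
    and "l \<in> SuppP0 V adj e"
    and "assoc_cycle V adj e l = Cseq V adj e n"
  shows "(\<forall>v\<in>supp V (ZK V adj e - Cseq V adj e n). 0 \<le> l v) \<and>
         (\<forall>v\<in>V - supp V (ZK V adj e - Cseq V adj e n). l v < 0)"
proof -
  have fin: "finite V" using assms(1) unfolding is_tree_def by blast
  define Z where "Z = ZK V adj e"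
  have cZ: "cyc V Z" unfolding Z_def by (rule ZK_cyc[OF fin assms(2)])
  have lL: "l \<in> Lat V" using assms(7) unfolding SuppP0_def by blast
  hence cl: "cyc V l" and il: "\<And>w. l w \<in> \<int>" unfolding Lat_def integral_def by auto
  define l' where "l' = (\<lambda>w. if w \<in> V then (if l w < 0 then Z w else Z w - 1 - l w) else 0)"
  define P where "P = (\<lambda>y. cyc V y \<and> y \<le> Z \<and>
      (\<forall>v\<in>Vneg V l. y v = Z v) \<and>
      (\<exists>m :: 'a \<Rightarrow> nat. l = Z - Etot V - y
          - (\<lambda>w. if w \<in> Vneg V l then of_nat (m w) else 0)))"
  have Pl': "P l'"
    unfolding P_def
  proof (intro conjI)
    show "cyc V l'" unfolding cyc_def l'_def by simp
    show "l' \<le> Z" unfolding le_fun_def l'_def using cZ cl unfolding cyc_def by auto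
    show "\<forall>v\<in>Vneg V l. l' v = Z v" unfolding Vneg_def l'_def by auto
    define m where "m = (\<lambda>w. nat (- 1 - \<lfloor>l w\<rfloor>))"
    have "l = Z - Etot V - l' - (\<lambda>w. if w \<in> Vneg V l then of_nat (m w) else 0)"
    proof
      fix w
      show "l w = (Z - Etot V - l' - (\<lambda>w. if w \<in> Vneg V l then of_nat (m w) else 0)) w"
      proof (cases "w \<in> V")
        case False thus ?thesis using cZ cl unfolding cyc_def l'_def Etot_def Vneg_def by simp
      next
        case True
        from il[of w] obtain k where k: "l w = of_int k" by (auto elim: Ints_cases)
        show ?thesis using True k unfolding l'_def Etot_def Vneg_def m_def by auto
      qed
    qed
    thus "\<exists>m :: 'a \<Rightarrow> nat. l = Z - Etot V - l' - (\<lambda>w. if w \<in> Vneg V l then of_nat (m w) else 0)"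
      by blast
  qed
  have uni: "y = l'" if "P y" for y
  proof
    fix w
    from that obtain m where cy: "cyc V y" and ag: "\<forall>v\<in>Vneg V l. y v = Z v"
      and eq: "l = Z - Etot V - y - (\<lambda>w. if w \<in> Vneg V l then of_nat (m w) else 0)"
      unfolding P_def by blast
    have eqw: "l w = Z w - Etot V w - y w - (if w \<in> Vneg V l then of_nat (m w) else 0)"
      using fun_cong[OF eq, of w] by simp
    show "y w = l' w"
    proof (cases "w \<in> V")
      case False thus ?thesis using cy unfolding cyc_def l'_def by simp
    next
      case True
      thus ?thesis using ag eqw unfolding l'_def Vneg_def Etot_def by auto
    qed
  qed
  have "assoc_cycle V adj e l = l'"
    unfolding assoc_cycle_def Z_def[symmetric] P_def[symmetric]
    by (rule the1_equality) (use Pl' uni in blast)+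
  hence C: "Cseq V adj e n = l'" using assms(8) by simp
  show ?thesis
    unfolding C Z_def[symmetric] supp_def l'_def by auto
qed

end
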